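(* Let $k$ be a field of characteristic zero and $r,n\geq1$. The centers of $\mathcal{D}(\mathcal{A}(C_r\wr\mathfrak{S}_n))$ and of $\mathcal{D}(\mathcal{B}_n)$ are $k$.
   Context: $\mathcal{A}(C_r\wr\mathfrak{S}_n)$ denotes the arrangement in $k^n$ (coordinates $x_1,\ldots,x_n$) with defining polynomial $x_1\cdots x_n\prod_{1\le i<j\le n}(x_j^r-x_i^r)$; its module of tangent derivations is free with basis $\alpha_1(x_k)=x_k$, $\alpha_m(x_k)=x_k\prod_{i=1}^{m-1}(x_k^r-x_i^r)$ ($2\le m\le n$). $\mathcal{B}_n$ is the braid arrangement in $k^n$ with hyperplanes $x_i=x_j$, $1\le i<j\le n$. For an arrangement $\mathcal{A}$ with defining polynomial $Q$ in $S=k[x_1,\ldots,x_n]$, $\mathcal{D}(\mathcal{A})=\bigcap_{m\ge1}\{P\in\mathcal{D}(S):P\,Q^m\mathcal{D}(S)\subseteq Q^m\mathcal{D}(S)\}$, where $\mathcal{D}(S)$ is the algebra of differential operators on $S$; for these (free) arrangements it is the subalgebra of $\operatorname{End}_k(S)$ generated by the tangent derivations and multiplications by elements of $S$. *)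

theory Defs
  imports "HOL-Library.Poly_Mapping"
begin

text \<open>Polynomials over k in the variables x_0, x_1, ... are finitely supported maps from monomials (exponent vectors) to coefficients. The coordinate ring S = k[x_1,...,x_n] is the subset of polynomials involving only variables with index < n (the paper x_i is index i-1).\<close>

type_synonym 'k mpoly = "(nat \<Rightarrow>\<^sub>0 nat) \<Rightarrow>\<^sub>0 'k"

definition Var :: "nat \<Rightarrow> 'k::comm_ring_1 mpoly" where
  "Var i = Poly_Mapping.single (Poly_Mapping.single i 1) 1"

definition Const :: "'k::comm_ring_1 \<Rightarrow> 'k mpoly" where
  "Const c = Poly_Mapping.single 0 c"

definition polys :: "nat \<Rightarrow> 'k::comm_ring_1 mpoly set" where
  "polys n = {p. \<forall>m\<in>Poly_Mapping.keys p. Poly_Mapping.keys m \<subseteq> {..<n}}"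

definition pdiff :: "nat \<Rightarrow> 'k::comm_ring_1 mpoly \<Rightarrow> 'k mpoly" where
  "pdiff i p = (\<Sum>m\<in>Poly_Mapping.keys p. Poly_Mapping.single (m - Poly_Mapping.single i 1)
                     (of_nat (Poly_Mapping.lookup m i) * Poly_Mapping.lookup p m))"

definition derivation :: "nat \<Rightarrow> (nat \<Rightarrow> 'k::comm_ring_1 mpoly) \<Rightarrow> 'k mpoly \<Rightarrow> 'k mpoly" where
  "derivation n a p = (\<Sum>k<n. a k * pdiff k p)"

definition tangent_derivations :: "nat \<Rightarrow> 'k::comm_ring_1 mpoly \<Rightarrow> ('k mpoly \<Rightarrow> 'k mpoly) set" where
  "tangent_derivations n Q =
     {derivation n a | a. (\<forall>k<n. a k \<in> polys n) \<and>
                          (\<exists>h\<in>polys n. derivation n a Q = Q * h)}"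

text \<open>Subalgebra of End_k(S) generated by multiplications by elements of S and
a set G of operators (k-scalars are multiplications by constants).\<close>
inductive_set gen_alg :: "nat \<Rightarrow> ('k::comm_ring_1 mpoly \<Rightarrow> 'k mpoly) set
                           \<Rightarrow> ('k mpoly \<Rightarrow> 'k mpoly) set"
  for n G where
  mult: "f \<in> polys n \<Longrightarrow> (\<lambda>p. f * p) \<in> gen_alg n G"
| gen: "\<theta> \<in> G \<Longrightarrow> \<theta> \<in> gen_alg n G"
| add: "P \<in> gen_alg n G \<Longrightarrow> R \<in> gen_alg n G \<Longrightarrow> (\<lambda>p. P p + R p) \<in> gen_alg n G"
| comp: "P \<in> gen_alg n G \<Longrightarrow> R \<in> gen_alg n G \<Longrightarrow> (P \<circ> R) \<in> gen_alg n G"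

definition Dalg :: "nat \<Rightarrow> 'k::comm_ring_1 mpoly \<Rightarrow> ('k mpoly \<Rightarrow> 'k mpoly) set" where
  "Dalg n Q = gen_alg n (tangent_derivations n Q)"

text \<open>Operators are compared as elements of End_k(S), i.e. on S.\<close>
definition center_is_scalars :: "nat \<Rightarrow> ('k::comm_ring_1 mpoly \<Rightarrow> 'k mpoly) set \<Rightarrow> bool" where
  "center_is_scalars n D \<longleftrightarrow>
     (\<forall>P\<in>D. (\<forall>R\<in>D. \<forall>p\<in>polys n. P (R p) = R (P p)) \<longleftrightarrow>
             (\<exists>c. \<forall>p\<in>polys n. P p = Const c * p))"

definition Q_wreath :: "nat \<Rightarrow> nat \<Rightarrow> 'k::comm_ring_1 mpoly" where
  "Q_wreath r n = (\<Prod>i<n. Var i) *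
                  (\<Prod>(i,j)\<in>{(i,j). i < j \<and> j < n}. Var j ^ r - Var i ^ r)"

definition Q_braid :: "nat \<Rightarrow> 'k::comm_ring_1 mpoly" where
  "Q_braid n = (\<Prod>(i,j)\<in>{(i,j). i < j \<and> j < n}. Var j - Var i)"

end

theory Submission
  imports Defs
begin

lemma lookup_Const_mult: "Poly_Mapping.lookup (Const c * p) m = c * Poly_Mapping.lookup p m"
  unfolding Const_def by (simp flip: mult_map_scale_conv_mult add: Poly_Mapping.map.rep_eq when_def)

lemma lookup_pdiff:
  fixes p :: "'k::comm_ring_1 mpoly"
  shows "Poly_Mapping.lookup (pdiff i p) m' =
    of_nat (Poly_Mapping.lookup m' i + 1) * Poly_Mapping.lookup p (m' + Poly_Mapping.single i 1)"
proof -
  let ?s = "Poly_Mapping.single i (1::nat)"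
  have "Poly_Mapping.lookup (pdiff i p) m' =
     (\<Sum>m\<in>Poly_Mapping.keys p. if m - ?s = m' then of_nat (Poly_Mapping.lookup m i) * Poly_Mapping.lookup p m else 0)"
    unfolding pdiff_def lookup_sum by (intro sum.cong refl) (simp add: lookup_single when_def)
  also have "\<dots> = (\<Sum>m\<in>Poly_Mapping.keys p. if m = m' + ?s then of_nat (Poly_Mapping.lookup m i) * Poly_Mapping.lookup p m else 0)"
  proof (intro sum.cong refl)
    fix m assume "m \<in> Poly_Mapping.keys p"
    show "(if m - ?s = m' then of_nat (Poly_Mapping.lookup m i) * Poly_Mapping.lookup p m else 0) =
          (if m = m' + ?s then of_nat (Poly_Mapping.lookup m i) * Poly_Mapping.lookup p m else 0)"
    proof (cases "Poly_Mapping.lookup m i = 0")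
      case True
      then show ?thesis by simp
    next
      case False
      have "m - ?s = m' \<longleftrightarrow> m = m' + ?s"
      proof
        assume h: "m - ?s = m'"
        show "m = m' + ?s"
          by (rule poly_mapping_eqI) (use False in \<open>auto simp: h[symmetric] lookup_minus lookup_add lookup_single when_def\<close>)
      next
        assume "m = m' + ?s" then show "m - ?s = m'"
          by (intro poly_mapping_eqI) (simp add: lookup_minus lookup_add)
      qed
      then show ?thesis by simp
    qed
  qed
  also have "\<dots> = of_nat (Poly_Mapping.lookup m' i + 1) * Poly_Mapping.lookup p (m' + ?s)"
    by (simp add: lookup_add in_keys_iff)
  finally show ?thesis .
qed


lemma polys_iff: "p \<in> polys n \<longleftrightarrow> (\<forall>m. Poly_Mapping.lookup p m \<noteq> 0 \<longrightarrow> Poly_Mapping.keys m \<subseteq> {..<n})"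
  unfolding polys_def by (auto simp: in_keys_iff)

lemma polys_0[simp]: "0 \<in> polys n" by (simp add: polys_def)
lemma polys_1[simp]: "1 \<in> polys n" by (simp add: polys_def)
lemma polys_Const[simp]: "Const c \<in> polys n" by (simp add: polys_def Const_def)
lemma polys_Var[simp]: "i < n \<Longrightarrow> Var i \<in> polys n" by (simp add: polys_def Var_def)

lemma polys_add[simp]: assumes "p \<in> polys n" "q \<in> polys n" shows "p + q \<in> polys n"
  unfolding polys_iff
proof (intro allI impI)
  fix m assume "Poly_Mapping.lookup (p + q) m \<noteq> 0"
  then have "Poly_Mapping.lookup p m \<noteq> 0 \<or> Poly_Mapping.lookup q m \<noteq> 0" by (auto simp: lookup_add)
  then show "Poly_Mapping.keys m \<subseteq> {..<n}" using assms unfolding polys_iff by blast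
qed

lemma polys_diff[simp]: assumes "p \<in> polys n" "(q::'k::comm_ring_1 mpoly) \<in> polys n" shows "p - q \<in> polys n"
  unfolding polys_iff
proof (intro allI impI)
  fix m assume "Poly_Mapping.lookup (p - q) m \<noteq> 0"
  then have "Poly_Mapping.lookup p m \<noteq> 0 \<or> Poly_Mapping.lookup q m \<noteq> 0" by (auto simp: lookup_minus)
  then show "Poly_Mapping.keys m \<subseteq> {..<n}" using assms unfolding polys_iff by blast
qed

lemma keys_plus_nat: "Poly_Mapping.keys ((a::nat \<Rightarrow>\<^sub>0 nat) + b) = Poly_Mapping.keys a \<union> Poly_Mapping.keys b"
  by (auto simp: in_keys_iff lookup_add)

lemma polys_mult[simp]: "p \<in> polys n \<Longrightarrow> (q::'k::comm_ring_1 mpoly) \<in> polys n \<Longrightarrow> p * q \<in> polys n"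
  unfolding polys_def using keys_mult[of p q] by (force simp: keys_plus_nat)

lemma polys_sum: "(\<And>x. x \<in> A \<Longrightarrow> f x \<in> polys n) \<Longrightarrow> (\<Sum>x\<in>A. (f x::'k::comm_ring_1 mpoly)) \<in> polys n"
  by (induction A rule: infinite_finite_induct) auto

lemma polys_prod: "(\<And>x. x \<in> A \<Longrightarrow> f x \<in> polys n) \<Longrightarrow> (\<Prod>x\<in>A. (f x::'k::comm_ring_1 mpoly)) \<in> polys n"
  by (induction A rule: infinite_finite_induct) auto

lemma polys_power[simp]: "p \<in> polys n \<Longrightarrow> (p::'k::comm_ring_1 mpoly) ^ k \<in> polys n"
  by (induction k) auto

lemma polys_pdiff[simp]: "p \<in> polys n \<Longrightarrow> pdiff i (p::'k::comm_ring_1 mpoly) \<in> polys n"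
  unfolding polys_iff lookup_pdiff
proof (intro allI impI)
  fix m assume p: "\<forall>m. Poly_Mapping.lookup p m \<noteq> 0 \<longrightarrow> Poly_Mapping.keys m \<subseteq> {..<n}"
    and h: "of_nat (Poly_Mapping.lookup m i + 1) * Poly_Mapping.lookup p (m + Poly_Mapping.single i 1) \<noteq> (0::'k)"
  then have "Poly_Mapping.lookup p (m + Poly_Mapping.single i 1) \<noteq> 0" by (metis mult_zero_right)
  with p have "Poly_Mapping.keys (m + Poly_Mapping.single i 1) \<subseteq> {..<n}" by blast
  then show "Poly_Mapping.keys m \<subseteq> {..<n}" by (simp add: keys_plus_nat)
qed

lemma polys_derivation: "p \<in> polys n \<Longrightarrow> (\<And>k. k < n \<Longrightarrow> a k \<in> polys n) \<Longrightarrow> derivation n a (p::'k::comm_ring_1 mpoly) \<in> polys n"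
  unfolding derivation_def by (intro polys_sum) auto

lemma pdiff_Const_mult: "pdiff i (Const c * p) = Const c * pdiff i (p::'k::comm_ring_1 mpoly)"
  by (rule poly_mapping_eqI) (simp only: lookup_pdiff lookup_Const_mult mult.left_commute)

lemma derivation_Const_mult: "derivation n a (Const c * p) = Const c * derivation n a (p::'k::comm_ring_1 mpoly)"
  unfolding derivation_def by (simp only: pdiff_Const_mult sum_distrib_left mult.left_commute)

lemma plus_single_nz: "(k::nat \<Rightarrow>\<^sub>0 nat) + Poly_Mapping.single i 1 \<noteq> 0"
proof
  assume "k + Poly_Mapping.single i 1 = 0"
  then have "Poly_Mapping.lookup (k + Poly_Mapping.single i 1) i = 0" by simp
  then show False by (simp add: lookup_add)
qed

lemma pdiff_1: "pdiff i (1::'k::comm_ring_1 mpoly) = 0"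
  by (rule poly_mapping_eqI) (simp add: lookup_pdiff lookup_one when_def plus_single_nz plus_single_nz[simplified])

lemma derivation_1: "derivation n a (1::'k::comm_ring_1 mpoly) = 0"
  unfolding derivation_def by (simp add: pdiff_1)

lemma gen_alg_props:
  assumes "R \<in> gen_alg n (tangent_derivations n (Q::'k::comm_ring_1 mpoly))"
  shows "(\<forall>p\<in>polys n. R p \<in> polys n) \<and> (\<forall>p\<in>polys n. \<forall>c. R (Const c * p) = Const c * R p)"
  using assms
proof (induction rule: gen_alg.induct)
  case (mult f)
  then show ?case by (auto simp: mult_ac)
next
  case (gen \<theta>)
  then show ?case unfolding tangent_derivations_def
    by (auto intro!: polys_derivation simp: derivation_Const_mult)
next
  case (add P R)
  then show ?case by (auto simp: distrib_left)
next
  case (comp P R)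
  then show ?case by auto
qed

lemma const_of_pdiff_zero:
  fixes g :: "'k::field_char_0 mpoly"
  assumes g: "g \<in> polys n" and d: "\<And>j. j < n \<Longrightarrow> pdiff j g = 0"
  shows "g = Const (Poly_Mapping.lookup g 0)"
proof -
  have "m = 0" if "Poly_Mapping.lookup g m \<noteq> 0" for m
  proof (rule ccontr)
    assume "m \<noteq> 0"
    then obtain i where i: "Poly_Mapping.lookup m i \<noteq> 0"
      by (metis lookup_zero poly_mapping_eqI)
    then have "i \<in> Poly_Mapping.keys m" by (simp add: in_keys_iff)
    then have "i < n" using g that unfolding polys_iff by blast
    let ?s = "Poly_Mapping.single i (1::nat)"
    have e: "m - ?s + ?s = m"
      by (rule poly_mapping_eqI) (use i in \<open>auto simp: lookup_minus lookup_add lookup_single when_def\<close>)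
    have "Poly_Mapping.lookup (pdiff i g) (m - ?s) = of_nat (Poly_Mapping.lookup m i) * Poly_Mapping.lookup g m"
      unfolding lookup_pdiff e using i by (simp add: lookup_minus)
    also have "\<dots> \<noteq> 0" using i that by simp
    finally show False using d[OF \<open>i < n\<close>] by simp
  qed
  then show ?thesis
    by (intro poly_mapping_eqI) (auto simp: Const_def lookup_single when_def)
qed

lemma center_main:
  fixes Q :: "'k::field_char_0 mpoly"
  assumes Qp: "Q \<in> polys n" and Q0: "Q \<noteq> 0"
  shows "center_is_scalars n (Dalg n Q)"
  unfolding center_is_scalars_def
proof (intro ballI)
  fix P assume PD: "P \<in> Dalg n Q"
  note Pprops = gen_alg_props[OF PD[unfolded Dalg_def]]
  show "(\<forall>R\<in>Dalg n Q. \<forall>p\<in>polys n. P (R p) = R (P p)) \<longleftrightarrow> (\<exists>c. \<forall>p\<in>polys n. P p = Const c * p)"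
  proof (intro iffI)
    assume "\<exists>c. \<forall>p\<in>polys n. P p = Const c * p"
    then obtain c where c: "\<And>p. p \<in> polys n \<Longrightarrow> P p = Const c * p" by blast
    show "\<forall>R\<in>Dalg n Q. \<forall>p\<in>polys n. P (R p) = R (P p)"
    proof (intro ballI)
      fix R and p :: "'k mpoly" assume "R \<in> Dalg n Q" "p \<in> polys n"
      with gen_alg_props[of R n Q] show "P (R p) = R (P p)"
        unfolding Dalg_def by (simp add: c)
    qed
  next
    assume comm: "\<forall>R\<in>Dalg n Q. \<forall>p\<in>polys n. P (R p) = R (P p)"
    define g where "g = P 1"
    have gp: "g \<in> polys n" using Pprops by (simp add: g_def)
    have Pm: "P p = p * g" if "p \<in> polys n" for p
    proof -
      have "(\<lambda>q. p * q) \<in> Dalg n Q" unfolding Dalg_def using that by (rule gen_alg.mult)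
      with comm have "P ((\<lambda>q. p * q) 1) = (\<lambda>q. p * q) (P 1)" using polys_1 by blast
      then show ?thesis by (simp add: g_def)
    qed
    have "pdiff j g = 0" if j: "j < n" for j
    proof -
      define a where "a = (\<lambda>k. if k = j then Q else (0::'k mpoly))"
      have da: "derivation n a f = Q * pdiff j f" for f
      proof -
        have "derivation n a f = (\<Sum>k<n. if k = j then Q * pdiff k f else 0)"
          unfolding derivation_def a_def by (intro sum.cong refl) simp
        also have "\<dots> = Q * pdiff j f" using j by simp
        finally show ?thesis .
      qed
      have "derivation n a \<in> tangent_derivations n Q"
        unfolding tangent_derivations_def
      proof (rule CollectI, rule exI[of _ a], intro conjI refl allI impI)
        show "a k \<in> polys n" for k using Qp by (simp add: a_def)
        show "\<exists>h\<in>polys n. derivation n a Q = Q * h"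
          using Qp by (intro bexI[of _ "pdiff j Q"]) (simp_all only: da polys_pdiff)
      qed
      then have "derivation n a \<in> Dalg n Q" unfolding Dalg_def by (rule gen_alg.gen)
      with comm have "P (derivation n a 1) = derivation n a (P 1)" using polys_1 by blast
      then have "Q * pdiff j g = 0"
        by (simp add: derivation_1 Pm da flip: g_def)
      with Q0 show ?thesis by simp
    qed
    then have "g = Const (Poly_Mapping.lookup g 0)" using const_of_pdiff_zero gp by blast
    then show "\<exists>c. \<forall>p\<in>polys n. P p = Const c * p"
      using Pm by (metis mult.commute)
  qed
qed


lemma Var_power: "(Var j :: 'k::comm_ring_1 mpoly) ^ r = Poly_Mapping.single (Poly_Mapping.single j r) 1"
proof (induction r)
  case 0 then show ?case by simp
next
  case (Suc r)
  then show ?case by (simp add: Var_def mult_single single_add[symmetric] add.commute)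
qed

lemma Var_diff_nz:
  assumes "i \<noteq> j" "r \<ge> 1"
  shows "(Var j :: 'k::comm_ring_1 mpoly) ^ r - Var i ^ r \<noteq> 0"
proof
  let ?m = "Poly_Mapping.single j r"
  assume h: "(Var j :: 'k mpoly) ^ r - Var i ^ r = 0"
  have ne: "Poly_Mapping.single i r \<noteq> ?m"
  proof
    assume "Poly_Mapping.single i r = ?m"
    then have "Poly_Mapping.lookup (Poly_Mapping.single i r) j = Poly_Mapping.lookup ?m j" by simp
    with assms show False by (simp add: lookup_single when_def)
  qed
  have "Poly_Mapping.lookup ((Var j :: 'k mpoly) ^ r - Var i ^ r) ?m = 1"
    using ne by (simp add: Var_power lookup_minus lookup_single when_def)
  with h show False by simp
qed

lemma Var_nz: "(Var i :: 'k::field mpoly) \<noteq> 0"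
proof
  assume "(Var i :: 'k mpoly) = 0"
  then have "Poly_Mapping.lookup (Var i :: 'k mpoly) (Poly_Mapping.single i 1) = 0" by simp
  then show False by (simp add: Var_def)
qed

lemma fin_pairs: "finite {(i, j). i < j \<and> j < (n::nat)}"
  by (rule finite_subset[of _ "{..<n} \<times> {..<n}"]) auto

theorem corollary3p5:
  fixes r n :: nat
  assumes "r \<ge> 1" and "n \<ge> 1"
  shows "center_is_scalars n (Dalg n (Q_wreath r n :: 'k::field_char_0 mpoly))
       \<and> center_is_scalars n (Dalg n (Q_braid n :: 'k::field_char_0 mpoly))"
proof (rule conjI; rule center_main)
  show "(Q_wreath r n :: 'k mpoly) \<in> polys n"
    unfolding Q_wreath_def by (intro polys_mult polys_prod) auto
  show "(Q_braid n :: 'k mpoly) \<in> polys n"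
    unfolding Q_braid_def by (intro polys_prod) auto
  show "(Q_wreath r n :: 'k mpoly) \<noteq> 0"
    unfolding Q_wreath_def using Var_diff_nz[OF _ assms(1), where 'k='k]
    by (auto simp: prod_zero_iff Var_nz fin_pairs)
  show "(Q_braid n :: 'k mpoly) \<noteq> 0"
    unfolding Q_braid_def using Var_diff_nz[of _ _ 1, where 'k='k]
    by (auto simp: prod_zero_iff fin_pairs)
qed

end
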